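(* Let $n\ge1$ and let $i,j,k\in\{0,\dots,2^n-1\}$ be mutually distinct. (a) If $i\,n\,j$ and $j\,n\,k$, then not $i\,n\,k$; if $i\,n\,j$ and ($j\,d\,k$ or $j\,c\,k$), then $i\,n\,k$. (b) If $i\,c\,j$ and $j\,c\,k$, then $i\,c\,k$. (c) If $i\,d\,j$ and $j\,d\,k$, then $i\,c\,k$. (d) If $i\,c\,j$ and $j\,d\,k$, then $i\,d\,k$.
   Context: For $n\ge1$, an $n$-path is a string $\alpha_0\alpha_1\cdots\alpha_n$ with $\alpha_k\in\{0,1\}$, $\alpha_0=0$; the $n$-paths are identified with $\{0,\dots,2^n-1\}$, the path $\omega_j$ being the one whose string is the binary representation of $j$ (with $\alpha_n$ least significant). $D^n$ is the $2^n\times 2^n$ matrix with $D^n_{jk}=D^n(\omega_j,\omega_k)$, where $D^n(\omega,\omega')=2^{-n}\prod_{k=1}^n i^{|\alpha_k-\alpha_{k-1}|}\prod_{k=1}^n i^{-|\alpha'_k-\alpha'_{k-1}|}\,\delta_{\alpha_n\alpha'_n}$ for $\omega=\alpha_0\cdots\alpha_n$, $\omega'=\alpha'_0\cdots\alpha'_n$ (here $i=\sqrt{-1}$). For distinct indices $p,q$ the interference term is $I^n_{pq}=2\,\mathrm{Re}\,D^n_{pq}$. We write $p\,n\,q$ if $I^n_{pq}=0$, $p\,c\,q$ if $I^n_{pq}>0$, and $p\,d\,q$ if $I^n_{pq}<0$. *)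

theory Defs
  imports Complex_Main
begin

text \<open>The n-path with index j (0 <= j < 2^n) is the string alpha_0 alpha_1 ... alpha_n,
  the binary representation of j padded with a leading alpha_0 = 0, alpha_n least significant.\<close>
definition path_bit :: "nat \<Rightarrow> nat \<Rightarrow> nat \<Rightarrow> nat" where
  "path_bit n j k = (j div 2 ^ (n - k)) mod 2"

definition Dmat :: "nat \<Rightarrow> nat \<Rightarrow> nat \<Rightarrow> complex" where
  "Dmat n p q =
     (1 / 2 ^ n)
     * (\<Prod>k\<in>{1..n}. \<i> ^ nat \<bar>int (path_bit n p k) - int (path_bit n p (k - 1))\<bar>)
     * (\<Prod>k\<in>{1..n}. \<i> powi (- int (nat \<bar>int (path_bit n q k) - int (path_bit n q (k - 1))\<bar>)))
     * (if path_bit n p n = path_bit n q n then 1 else 0)"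

definition interference :: "nat \<Rightarrow> nat \<Rightarrow> nat \<Rightarrow> real" where
  "interference n p q = 2 * Re (Dmat n p q)"

definition rel_n :: "nat \<Rightarrow> nat \<Rightarrow> nat \<Rightarrow> bool" where
  "rel_n n p q \<longleftrightarrow> interference n p q = 0"

definition rel_c :: "nat \<Rightarrow> nat \<Rightarrow> nat \<Rightarrow> bool" where
  "rel_c n p q \<longleftrightarrow> interference n p q > 0"

definition rel_d :: "nat \<Rightarrow> nat \<Rightarrow> nat \<Rightarrow> bool" where
  "rel_d n p q \<longleftrightarrow> interference n p q < 0"

end

theory Submission
  imports Defs
begin

lemma par_sum:
  fixes m :: nat and b :: "nat \<Rightarrow> nat"
  assumes "\<And>k. b k < (2::nat)"
  shows "(\<Sum>k\<in>{1..m}. nat \<bar>int (b k) - int (b (k - 1))\<bar>) mod 2 = (b m + b 0) mod 2"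
proof (induction m)
  case 0 then show ?case by simp
next
  case (Suc m)
  have "{1..Suc m} = insert (Suc m) {1..m}" by auto
  then have e: "(\<Sum>k\<in>{1..Suc m}. nat \<bar>int (b k) - int (b (k - 1))\<bar>)
     = nat \<bar>int (b (Suc m)) - int (b m)\<bar> + (\<Sum>k\<in>{1..m}. nat \<bar>int (b k) - int (b (k - 1))\<bar>)"
    by simp
  have a: "b (Suc m) = 0 \<or> b (Suc m) = 1" "b m = 0 \<or> b m = 1" using assms[of "Suc m"] assms[of m] by auto
  define S where "S = (\<Sum>k\<in>{1..m}. nat \<bar>int (b k) - int (b (k - 1))\<bar>)"
  define d where "d = nat \<bar>int (b (Suc m)) - int (b m)\<bar>"
  have IH: "S mod 2 = (b m + b 0) mod 2" using Suc.IH unfolding S_def .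
  have "(d + S) mod 2 = (d + (b m + b 0) mod 2) mod 2" by (metis mod_add_right_eq IH)
  moreover have "(d + (b m + b 0) mod 2) mod 2 = (b (Suc m) + b 0) mod 2"
    using a unfolding d_def by (elim disjE; simp; presburger)
  ultimately show ?case unfolding e S_def d_def by simp
qed

lemma pow4: "(x::complex)^4 = 1 \<Longrightarrow> x^m = x^(m mod 4)"
proof -
  assume h: "x^4 = 1"
  have "x^m = x^(4*(m div 4) + m mod 4)" by (metis div_mult_mod_eq mult.commute)
  also have "\<dots> = x^(m mod 4)" by (simp only: power_add power_mult h power_one mult_1_left)
  finally show ?thesis .
qed

definition fl :: "nat \<Rightarrow> nat \<Rightarrow> nat" where
  "fl n p = (\<Sum>k\<in>{1..n}. nat \<bar>int (path_bit n p k) - int (path_bit n p (k - 1))\<bar>)"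

definition g :: "nat \<Rightarrow> nat \<Rightarrow> nat" where "g n p = fl n p mod 4"

definition h :: "nat \<Rightarrow> nat \<Rightarrow> real" where
  "h a b = (if a mod 2 = b mod 2 then Re (\<i>^a * (-\<i>)^b) else 0)"

lemma fl_par: assumes "p < 2^n" shows "fl n p mod 2 = path_bit n p n"
proof -
  have "fl n p mod 2 = (path_bit n p n + path_bit n p 0) mod 2"
    unfolding fl_def by (rule par_sum) (simp add: path_bit_def)
  moreover have "path_bit n p 0 = 0" using assms by (simp add: path_bit_def)
  moreover have "path_bit n p n < 2" by (simp add: path_bit_def)
  ultimately show ?thesis by simp
qed

lemma g_par: "p < 2^n \<Longrightarrow> g n p mod 2 = path_bit n p n"
  using fl_par unfolding g_def by (metis mod_mod_cancel dvd_def numeral_Bit0 mult_2_right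
    numeral_One one_add_one)

lemma powi_neg: "\<i> powi (- int m) = (-\<i>)^m"
proof -
  have "\<i> powi (- int m) = inverse (\<i>^m)" by (simp add: power_int_minus)
  also have "\<dots> = (inverse \<i>)^m" by (rule power_inverse[symmetric])
  also have "inverse \<i> = - \<i>" by simp
  finally show ?thesis .
qed

lemma interf: assumes "p < 2^n" "q < 2^n"
  shows "interference n p q = 2 / 2^n * h (g n p) (g n q)"
proof -
  have "Dmat n p q = (1 / 2 ^ n) * \<i>^(fl n p) * (-\<i>)^(fl n q)
      * (if path_bit n p n = path_bit n q n then 1 else 0)"
    unfolding Dmat_def fl_def powi_neg by (simp add: power_sum)
  also have "\<i>^(fl n p) = \<i>^(g n p)" unfolding g_def by (rule pow4) simp
  also have "(-\<i>)^(fl n q) = (-\<i>)^(g n q)" unfolding g_def by (rule pow4) simp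
  also have "(path_bit n p n = path_bit n q n) = (g n p mod 2 = g n q mod 2)"
    using g_par assms by simp
  finally show ?thesis unfolding interference_def h_def by simp
qed

lemma hv: assumes "a < 4" "b < 4"
  shows "h a b = (if a mod 2 \<noteq> b mod 2 then 0 else if a = b then 1 else -1)"
proof -
  have i3: "\<i>^3 = -\<i>" by (simp add: power3_eq_cube)
  have "a = 0 \<or> a = 1 \<or> a = 2 \<or> a = 3" "b = 0 \<or> b = 1 \<or> b = 2 \<or> b = 3" using assms by auto
  then show ?thesis by (elim disjE; simp add: h_def i3 power3_eq_cube)
qed

lemma finite_check:
  assumes "a < 4" "b < 4" "c < (4::nat)"
  shows "((h a b = 0 \<and> h b c = 0) \<longrightarrow> \<not> h a c = 0)
       \<and> ((h a b = 0 \<and> (h b c < 0 \<or> h b c > 0)) \<longrightarrow> h a c = 0)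
       \<and> ((h a b > 0 \<and> h b c > 0) \<longrightarrow> h a c > 0)
       \<and> ((h a b < 0 \<and> h b c < 0) \<longrightarrow> h a c > 0)
       \<and> ((h a b > 0 \<and> h b c < 0) \<longrightarrow> h a c < 0)"
proof -
  have "a = 0 \<or> a = 1 \<or> a = 2 \<or> a = 3" "b = 0 \<or> b = 1 \<or> b = 2 \<or> b = 3" "c = 0 \<or> c = 1 \<or> c = 2 \<or> c = 3" using assms by auto
  then show ?thesis unfolding hv[OF assms(1,2)] hv[OF assms(2,3)] hv[OF assms(1,3)]
    by (elim disjE; simp)
qed

lemma rels: assumes "p < 2^n" "q < 2^n"
  shows "rel_n n p q = (h (g n p) (g n q) = 0)" "rel_c n p q = (h (g n p) (g n q) > 0)"
    "rel_d n p q = (h (g n p) (g n q) < 0)"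
  unfolding rel_n_def rel_c_def rel_d_def interf[OF assms]
  by (auto simp: zero_less_divide_iff divide_less_0_iff zero_less_mult_iff mult_less_0_iff)

theorem corollary2p2:
  fixes n i j k :: nat
  assumes "n \<ge> 1" and "i < 2 ^ n" and "j < 2 ^ n" and "k < 2 ^ n"
    and "i \<noteq> j" and "j \<noteq> k" and "i \<noteq> k"
  shows "((rel_n n i j \<and> rel_n n j k) \<longrightarrow> \<not> rel_n n i k)
       \<and> ((rel_n n i j \<and> (rel_d n j k \<or> rel_c n j k)) \<longrightarrow> rel_n n i k)
       \<and> ((rel_c n i j \<and> rel_c n j k) \<longrightarrow> rel_c n i k)
       \<and> ((rel_d n i j \<and> rel_d n j k) \<longrightarrow> rel_c n i k)
       \<and> ((rel_c n i j \<and> rel_d n j k) \<longrightarrow> rel_d n i k)"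
proof -
  have "g n i < 4" "g n j < 4" "g n k < 4" by (auto simp: g_def)
  from finite_check[OF this] show ?thesis
    using assms by (simp add: rels)
qed

end
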